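(* For every positive integer $k$, $\theta\in[0,\pi]$, $s_4>0$ and $s_5\ge0$, the function $\frac{H-1}{\sqrt{-Q}}$ is monotonically non-increasing along $\xi(k,\theta,s_4,s_5)$ as long as the integral curve lies in $\mathcal B$.
   Context: Fix an integer $m\ge1$, $n=4m+3$. On $\mathbb R^8$ with coordinates $(X_1,X_2,X_3,Z_1,Z_2,Z_3,Z_4,W)$ set $G=X_1^2+2X_2^2+4mX_3^2$, $H=X_1+2X_2+4mX_3$, $R_1=2Z_1Z_2+4mZ_1Z_3$, $R_2=4Z_2-2Z_1Z_2+4mZ_3$, $R_3=(4m+8)Z_4-2Z_1Z_3-4Z_3$, $R_s=R_1+2R_2+4mR_3$, $Q=G+R_s+(n-1)\frac\epsilon2W-1$, and consider, for $\epsilon\in\{0,1\}$, the system $X_i'=X_i(G-\frac\epsilon2W-1)+R_i+\frac\epsilon2W$ ($i=1,2,3$), $Z_1'=2Z_1(X_1-X_2)$, $Z_2'=2Z_2(G-\frac\epsilon2W-X_2)$, $Z_3'=2Z_3(G-\frac\epsilon2W+X_2-2X_3)$, $Z_4'=2Z_4(G-\frac\epsilon2W-X_3)$, $W'=2W(G-\frac\epsilon2W)$. $\mathcal{RS}=\{Q\le0\}\cap\{H\le1\}\cap\{W\ge0\}\cap\{Z_1,Z_2,Z_3,Z_4\ge0\}\cap\{Z_4^2=Z_2Z_3\}$; $\mathcal B=\mathcal{RS}\cap\{1-Z_1\ge0\}\cap\{X_1-X_2\ge0\}\cap\{Z_2-Z_3\ge0\}\cap\{2(\sqrt{Z_2}-\sqrt{Z_3})+X_3-X_2\ge0\}\cap\{X_1,X_2,X_3\ge0\}$.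 Let $p_0=(1,0,0,0,0,0,0,0)$, $w_1=(-(4m+2)(2m+2),2m+2,2m+2,0,1,1,1,0)$, $w_2=(-4,2,0,0,1,0,0,0)$, $w_3=(-4(m+1)^2\sqrt2,2\sqrt2,(m+2)\sqrt2,0,\sqrt2,0,\tfrac{\sqrt2}{2},0)$, $w_4=(-1,0,\dots,0)$, $w_5=(-(4m+2)\frac\epsilon2,\frac\epsilon2,\frac\epsilon2,0,0,0,0,2)$, $w_6=(0,0,0,1,0,0,0,0)$, $w(\theta,k)=\frac{1+\cos\theta}{2}w_1+\frac{1-\cos\theta}{2}w_2+\frac{\sin\theta}{\sqrt2}w_3+k^2(1+\sin\theta)w_6$. $\xi(k,\theta,s_4,s_5)$ is the maximal integral curve with $\xi(\eta)=p_0+e^{2\eta}(w(\theta,k)+s_4w_4+s_5w_5)+O(e^{(2+\delta)\eta})$ as $\eta\to-\infty$ for some $\delta>0$, with $\epsilon=1$ if $s_5>0$ and $\epsilon=0$ if $s_5=0$. (Along such a curve with $s_4>0$, $Q<0$.) *)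

theory Defs
  imports "HOL-Analysis.Analysis"
begin

type_synonym pt = "real ^ 8"

definition vec8 :: "real \<Rightarrow> real \<Rightarrow> real \<Rightarrow> real \<Rightarrow> real \<Rightarrow> real \<Rightarrow> real \<Rightarrow> real \<Rightarrow> pt" where
  "vec8 a1 a2 a3 a4 a5 a6 a7 a8 = (\<chi> i. if i = 1 then a1 else if i = 2 then a2 else if i = 3 then a3
     else if i = 4 then a4 else if i = 5 then a5 else if i = 6 then a6 else if i = 7 then a7 else a8)"

definition X1 :: "pt \<Rightarrow> real" where "X1 x = x $ 1"
definition X2 :: "pt \<Rightarrow> real" where "X2 x = x $ 2"
definition X3 :: "pt \<Rightarrow> real" where "X3 x = x $ 3"
definition Z1 :: "pt \<Rightarrow> real" where "Z1 x = x $ 4"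
definition Z2 :: "pt \<Rightarrow> real" where "Z2 x = x $ 5"
definition Z3 :: "pt \<Rightarrow> real" where "Z3 x = x $ 6"
definition Z4 :: "pt \<Rightarrow> real" where "Z4 x = x $ 7"
definition Wc :: "pt \<Rightarrow> real" where "Wc x = x $ 8"

(* m is the fixed integer m >= 1, n = 4m+3; e is epsilon *)
definition Gf :: "nat \<Rightarrow> pt \<Rightarrow> real" where
  "Gf m x = X1 x ^ 2 + 2 * X2 x ^ 2 + 4 * real m * X3 x ^ 2"
definition Hf :: "nat \<Rightarrow> pt \<Rightarrow> real" where
  "Hf m x = X1 x + 2 * X2 x + 4 * real m * X3 x"
definition R1 :: "nat \<Rightarrow> pt \<Rightarrow> real" where
  "R1 m x = 2 * Z1 x * Z2 x + 4 * real m * Z1 x * Z3 x"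
definition R2 :: "nat \<Rightarrow> pt \<Rightarrow> real" where
  "R2 m x = 4 * Z2 x - 2 * Z1 x * Z2 x + 4 * real m * Z3 x"
definition R3 :: "nat \<Rightarrow> pt \<Rightarrow> real" where
  "R3 m x = (4 * real m + 8) * Z4 x - 2 * Z1 x * Z3 x - 4 * Z3 x"
definition Rs :: "nat \<Rightarrow> pt \<Rightarrow> real" where
  "Rs m x = R1 m x + 2 * R2 m x + 4 * real m * R3 m x"
definition nn :: "nat \<Rightarrow> nat" where "nn m = 4 * m + 3"
definition Qf :: "nat \<Rightarrow> real \<Rightarrow> pt \<Rightarrow> real" where
  "Qf m e x = Gf m x + Rs m x + (real (nn m) - 1) * (e / 2) * Wc x - 1"

definition Fld :: "nat \<Rightarrow> real \<Rightarrow> pt \<Rightarrow> pt" where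
  "Fld m e x = (let g = Gf m x - e / 2 * Wc x in
     vec8 (X1 x * (g - 1) + R1 m x + e / 2 * Wc x)
          (X2 x * (g - 1) + R2 m x + e / 2 * Wc x)
          (X3 x * (g - 1) + R3 m x + e / 2 * Wc x)
          (2 * Z1 x * (X1 x - X2 x))
          (2 * Z2 x * (g - X2 x))
          (2 * Z3 x * (g + X2 x - 2 * X3 x))
          (2 * Z4 x * (g - X3 x))
          (2 * Wc x * g))"

definition RS :: "nat \<Rightarrow> real \<Rightarrow> pt set" where
  "RS m e = {x. Qf m e x \<le> 0 \<and> Hf m x \<le> 1 \<and> Wc x \<ge> 0 \<and> Z1 x \<ge> 0 \<and> Z2 x \<ge> 0 \<and> Z3 x \<ge> 0
      \<and> Z4 x \<ge> 0 \<and> Z4 x ^ 2 = Z2 x * Z3 x}"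

definition Bset :: "nat \<Rightarrow> real \<Rightarrow> pt set" where
  "Bset m e = RS m e \<inter> {x. 1 - Z1 x \<ge> 0 \<and> X1 x - X2 x \<ge> 0 \<and> Z2 x - Z3 x \<ge> 0
      \<and> 2 * (sqrt (Z2 x) - sqrt (Z3 x)) + X3 x - X2 x \<ge> 0
      \<and> X1 x \<ge> 0 \<and> X2 x \<ge> 0 \<and> X3 x \<ge> 0}"

definition p0 :: pt where "p0 = vec8 1 0 0 0 0 0 0 0"
definition w1 :: "nat \<Rightarrow> pt" where
  "w1 m = vec8 (- (4 * real m + 2) * (2 * real m + 2)) (2 * real m + 2) (2 * real m + 2) 0 1 1 1 0"
definition w2 :: pt where "w2 = vec8 (-4) 2 0 0 1 0 0 0"
definition w3 :: "nat \<Rightarrow> pt" where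
  "w3 m = vec8 (- 4 * (real m + 1) ^ 2 * sqrt 2) (2 * sqrt 2) ((real m + 2) * sqrt 2) 0 (sqrt 2) 0 (sqrt 2 / 2) 0"
definition w4 :: pt where "w4 = vec8 (-1) 0 0 0 0 0 0 0"
definition w5 :: "nat \<Rightarrow> real \<Rightarrow> pt" where
  "w5 m e = vec8 (- (4 * real m + 2) * (e / 2)) (e / 2) (e / 2) 0 0 0 0 2"
definition w6 :: pt where "w6 = vec8 0 0 0 1 0 0 0 0"
definition wth :: "nat \<Rightarrow> real \<Rightarrow> nat \<Rightarrow> pt" where
  "wth m \<theta> k = ((1 + cos \<theta>) / 2) *\<^sub>R w1 m + ((1 - cos \<theta>) / 2) *\<^sub>R w2
      + (sin \<theta> / sqrt 2) *\<^sub>R w3 m + (real k ^ 2 * (1 + sin \<theta>)) *\<^sub>R w6"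

definition epsof :: "real \<Rightarrow> real" where "epsof s5 = (if s5 > 0 then 1 else 0)"

definition integral_curve :: "nat \<Rightarrow> real \<Rightarrow> (real \<Rightarrow> pt) \<Rightarrow> real set \<Rightarrow> bool" where
  "integral_curve m e xi J \<longleftrightarrow> open J \<and> is_interval J \<and> J \<noteq> {} \<and>
     (\<forall>t\<in>J. (xi has_vector_derivative Fld m e (xi t)) (at t))"

definition maximal_integral_curve :: "nat \<Rightarrow> real \<Rightarrow> (real \<Rightarrow> pt) \<Rightarrow> real set \<Rightarrow> bool" where
  "maximal_integral_curve m e xi J \<longleftrightarrow> integral_curve m e xi J \<and>
     (\<forall>J' xi'. integral_curve m e xi' J' \<and> J \<subseteq> J' \<and> (\<forall>t\<in>J. xi' t = xi t) \<longrightarrow> J' = J)"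

definition is_xi :: "nat \<Rightarrow> nat \<Rightarrow> real \<Rightarrow> real \<Rightarrow> real \<Rightarrow> (real \<Rightarrow> pt) \<Rightarrow> real set \<Rightarrow> bool" where
  "is_xi m k \<theta> s4 s5 xi J \<longleftrightarrow>
     maximal_integral_curve m (epsof s5) xi J \<and> (\<forall>b. \<exists>t\<in>J. t < b) \<and>
     (\<exists>\<delta>>0. \<exists>C. \<forall>\<^sub>F \<eta> in at_bot.
        norm (xi \<eta> - (p0 + exp (2 * \<eta>) *\<^sub>R (wth m \<theta> k + s4 *\<^sub>R w4 + s5 *\<^sub>R w5 m (epsof s5))))
          \<le> C * exp ((2 + \<delta>) * \<eta>))"

end

theory Submission
  imports Defs "HOL-Real_Asymp.Real_Asymp"
begin


lemma comp_deriv: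
  assumes "(xi has_vector_derivative v) (at t)"
  shows "((\<lambda>t. xi t $ i) has_real_derivative v $ i) (at t)"
proof -
  have "((\<lambda>t. xi t $ i) has_derivative (\<lambda>h. (h *\<^sub>R v) $ i)) (at t)"
    using bounded_linear.has_derivative[OF bounded_linear_vec_nth assms[unfolded has_vector_derivative_def]] .
  moreover have "(\<lambda>h. (h *\<^sub>R v) $ i) = (*) (v $ i)" by (auto simp: fun_eq_iff)
  ultimately show ?thesis by (simp add: has_field_derivative_def)
qed

lemma Fld_nth:
  "Fld m e x $ 1 = X1 x * (Gf m x - e / 2 * Wc x - 1) + R1 m x + e / 2 * Wc x"
  "Fld m e x $ 2 = X2 x * (Gf m x - e / 2 * Wc x - 1) + R2 m x + e / 2 * Wc x"
  "Fld m e x $ 3 = X3 x * (Gf m x - e / 2 * Wc x - 1) + R3 m x + e / 2 * Wc x"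
  "Fld m e x $ 4 = 2 * Z1 x * (X1 x - X2 x)"
  "Fld m e x $ 5 = 2 * Z2 x * (Gf m x - e / 2 * Wc x - X2 x)"
  "Fld m e x $ 6 = 2 * Z3 x * (Gf m x - e / 2 * Wc x + X2 x - 2 * X3 x)"
  "Fld m e x $ 7 = 2 * Z4 x * (Gf m x - e / 2 * Wc x - X3 x)"
  "Fld m e x $ 8 = 2 * Wc x * (Gf m x - e / 2 * Wc x)"
  by (simp_all add: Fld_def Let_def vec8_def)

lemma H_deriv:
  assumes "(xi has_vector_derivative Fld m e (xi t)) (at t)"
  shows "((\<lambda>t. Hf m (xi t)) has_real_derivative
     (Hf m (xi t) - 1) * (Gf m (xi t) - e/2 * Wc (xi t) - 1) + Qf m e (xi t)) (at t)"
proof -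
  note d = comp_deriv[OF assms]
  have "((\<lambda>t. Hf m (xi t)) has_real_derivative
     Fld m e (xi t) $ 1 + 2 * Fld m e (xi t) $ 2 + 4 * real m * Fld m e (xi t) $ 3) (at t)"
    unfolding Hf_def X1_def X2_def X3_def
    by (auto intro!: derivative_eq_intros d)
  moreover have "Fld m e (xi t) $ 1 + 2 * Fld m e (xi t) $ 2 + 4 * real m * Fld m e (xi t) $ 3
     = (Hf m (xi t) - 1) * (Gf m (xi t) - e/2 * Wc (xi t) - 1) + Qf m e (xi t)"
    unfolding Fld_nth Hf_def Qf_def Gf_def Rs_def R1_def R2_def R3_def nn_def
    by (simp add: algebra_simps)
  ultimately show ?thesis by simp
qed

lemma Q_deriv:
  assumes "(xi has_vector_derivative Fld m e (xi t)) (at t)"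
  shows "((\<lambda>t. Qf m e (xi t)) has_real_derivative
     2 * (Gf m (xi t) - e/2 * Wc (xi t)) * Qf m e (xi t) + e * Wc (xi t) * (Hf m (xi t) - 1)) (at t)"
proof -
  note d = comp_deriv[OF assms]
  define x where "x = xi t"
  have "((\<lambda>t. Qf m e (xi t)) has_real_derivative
     2 * X1 x * Fld m e x $ 1 + 4 * X2 x * Fld m e x $ 2 + 8 * real m * X3 x * Fld m e x $ 3
     + (2 * Fld m e x $ 4 * Z2 x + 2 * Z1 x * Fld m e x $ 5 + 4 * real m * (Fld m e x $ 4 * Z3 x + Z1 x * Fld m e x $ 6))
     + 2 * (4 * Fld m e x $ 5 - 2 * (Fld m e x $ 4 * Z2 x + Z1 x * Fld m e x $ 5) + 4 * real m * Fld m e x $ 6)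
     + 4 * real m * ((4 * real m + 8) * Fld m e x $ 7 - 2 * (Fld m e x $ 4 * Z3 x + Z1 x * Fld m e x $ 6) - 4 * Fld m e x $ 6)
     + (real (nn m) - 1) * (e / 2) * Fld m e x $ 8) (at t)"
    unfolding Qf_def Gf_def Rs_def R1_def R2_def R3_def X1_def X2_def X3_def Z1_def Z2_def Z3_def Z4_def Wc_def x_def
    apply (rule derivative_eq_intros d refl | simp)+
    apply (simp add: algebra_simps)
    done
  moreover have "2 * X1 x * Fld m e x $ 1 + 4 * X2 x * Fld m e x $ 2 + 8 * real m * X3 x * Fld m e x $ 3
     + (2 * Fld m e x $ 4 * Z2 x + 2 * Z1 x * Fld m e x $ 5 + 4 * real m * (Fld m e x $ 4 * Z3 x + Z1 x * Fld m e x $ 6))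
     + 2 * (4 * Fld m e x $ 5 - 2 * (Fld m e x $ 4 * Z2 x + Z1 x * Fld m e x $ 5) + 4 * real m * Fld m e x $ 6)
     + 4 * real m * ((4 * real m + 8) * Fld m e x $ 7 - 2 * (Fld m e x $ 4 * Z3 x + Z1 x * Fld m e x $ 6) - 4 * Fld m e x $ 6)
     + (real (nn m) - 1) * (e / 2) * Fld m e x $ 8
     = 2 * (Gf m x - e/2 * Wc x) * Qf m e x + e * Wc x * (Hf m x - 1)"
    unfolding Fld_nth Hf_def Qf_def Gf_def Rs_def R1_def R2_def R3_def nn_def
    by (simp add: algebra_simps power2_eq_square)
  ultimately show ?thesis by (simp add: x_def)
qed


lemma W_deriv:
  assumes "(xi has_vector_derivative Fld m e (xi t)) (at t)"
  shows "((\<lambda>t. Wc (xi t)) has_real_derivative 2 * (Gf m (xi t) - e/2 * Wc (xi t)) * Wc (xi t)) (at t)"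
  using comp_deriv[OF assms, of 8] unfolding Fld_nth by (simp add: Wc_def algebra_simps)


lemma pos2:
  fixes x y a b x' y' :: "real \<Rightarrow> real"
  assumes t01: "t0 \<le> t1"
    and dx: "\<And>t. t0 \<le> t \<Longrightarrow> t \<le> t1 \<Longrightarrow> (x has_real_derivative x' t) (at t)"
    and dy: "\<And>t. t0 \<le> t \<Longrightarrow> t \<le> t1 \<Longrightarrow> (y has_real_derivative y' t) (at t)"
    and ca: "continuous_on {t0..t1} a" and cb: "continuous_on {t0..t1} b"
    and ineq: "\<And>t. t0 \<le> t \<Longrightarrow> t \<le> t1 \<Longrightarrow> x t \<ge> 0 \<Longrightarrow> y t \<ge> 0 \<Longrightarrow>
        x' t \<ge> a t * x t \<and> y' t \<ge> b t * y t"
    and x0: "x t0 > 0" and y0: "y t0 > 0"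
  shows "x t1 > 0 \<and> y t1 > 0"
proof (rule ccontr)
  assume nc: "\<not> (x t1 > 0 \<and> y t1 > 0)"
  have cab: "continuous_on {t0..t1} (\<lambda>t. \<bar>a t\<bar> + \<bar>b t\<bar>)"
    by (intro continuous_intros ca cb)
  obtain tm where "tm \<in> {t0..t1}" and tm: "\<forall>t\<in>{t0..t1}. \<bar>a t\<bar> + \<bar>b t\<bar> \<le> \<bar>a tm\<bar> + \<bar>b tm\<bar>"
    using continuous_attains_sup[OF compact_Icc _ cab] t01 by auto
  define K where "K = \<bar>a tm\<bar> + \<bar>b tm\<bar>"
  have Ka: "\<bar>a t\<bar> \<le> K" and Kb: "\<bar>b t\<bar> \<le> K" if "t \<in> {t0..t1}" for t
    using tm that unfolding K_def by (smt (verit))+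
  have contx: "isCont x t" and conty: "isCont y t" if "t0 \<le> t" "t \<le> t1" for t
    using dx[OF that] dy[OF that] by (auto intro: DERIV_isCont)
  have cxy: "continuous_on {t0..t1} (\<lambda>t. min (x t) (y t))"
    using contx conty by (intro continuous_at_imp_continuous_on) (auto intro!: continuous_intros)
  define S where "S = {t0..t1} \<inter> (\<lambda>t. min (x t) (y t)) -` {..0}"
  have clS: "closed S" unfolding S_def
    by (rule continuous_closed_preimage[OF cxy]) auto
  have "t1 \<in> S" using nc t01 by (auto simp: S_def)
  hence neS: "S \<noteq> {}" by auto
  have bS: "bdd_below S" unfolding S_def by (auto intro: bdd_belowI[of _ t0])
  define s where "s = Inf S"
  have sS: "s \<in> S" unfolding s_def by (rule closed_contains_Inf[OF neS bS clS])
  hence s01: "t0 \<le> s" "s \<le> t1" by (auto simp: S_def)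
  have below: "x t > 0 \<and> y t > 0" if "t0 \<le> t" "t < s" for t
  proof (rule ccontr)
    assume "\<not> (x t > 0 \<and> y t > 0)"
    hence "t \<in> S" using that s01 by (auto simp: S_def)
    hence "s \<le> t" unfolding s_def using bS by (rule cInf_lower)
    thus False using that by simp
  qed
  have sne: "s \<noteq> t0" using sS x0 y0 by (auto simp: S_def)
  hence st0: "t0 < s" using s01 by simp
  have nonneg: "x t \<ge> 0 \<and> y t \<ge> 0" if "t0 \<le> t" "t \<le> s" for t
  proof (cases "t < s")
    case True thus ?thesis using below that by force
  next
    case False
    hence ts: "t = s" using that by simp
    have ev: "eventually (\<lambda>r. r \<in> {t0<..<s}) (at_left s)"
      using eventually_at_left_real[OF st0] .
    have lx: "(x \<longlongrightarrow> x s) (at_left s)" and ly: "(y \<longlongrightarrow> y s) (at_left s)"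
      using contx[OF s01] conty[OF s01] by (auto simp: isCont_def intro: tendsto_mono[OF at_le])
    have "0 \<le> x s"
      by (rule tendsto_lowerbound[OF lx]) (auto intro: eventually_mono[OF ev] simp: less_imp_le below trivial_limit_at_left_real)
    moreover have "0 \<le> y s"
      by (rule tendsto_lowerbound[OF ly]) (auto intro: eventually_mono[OF ev] simp: less_imp_le below trivial_limit_at_left_real)
    ultimately show ?thesis using ts by simp
  qed
  have grow: "f t0 * exp (K * t0) \<le> f s * exp (K * s)"
    if df: "\<And>t. t0 \<le> t \<Longrightarrow> t \<le> t1 \<Longrightarrow> (f has_real_derivative f' t) (at t)"
      and fi: "\<And>t. t0 \<le> t \<Longrightarrow> t \<le> s \<Longrightarrow> f' t \<ge> c t * f t \<and> f t \<ge> 0 \<and> \<bar>c t\<bar> \<le> K"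
    for f f' c :: "real \<Rightarrow> real"
  proof (rule DERIV_nonneg_imp_nondecreasing[OF s01(1)])
    fix t assume t: "t0 \<le> t" "t \<le> s"
    have "((\<lambda>t. f t * exp (K * t)) has_real_derivative f' t * exp (K * t) + f t * (exp (K * t) * K)) (at t)"
      using t s01 by (auto intro!: derivative_eq_intros df)
    moreover have "f' t * exp (K * t) + f t * (exp (K * t) * K) \<ge> 0"
    proof -
      from fi[OF t] have "(c t + K) * f t \<ge> 0"
        by (intro mult_nonneg_nonneg) (auto simp: abs_le_iff)
      hence "f' t + K * f t \<ge> 0" using fi[OF t] by (simp add: algebra_simps)
      hence "(f' t + K * f t) * exp (K * t) \<ge> 0" by simp
      thus ?thesis by (simp add: algebra_simps)
    qed
    ultimately show "\<exists>y. ((\<lambda>t. f t * exp (K * t)) has_real_derivative y) (at t) \<and> 0 \<le> y" by blast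
  qed
  have "x t0 * exp (K * t0) \<le> x s * exp (K * s)"
    by (rule grow[of x x' a]) (use dx ineq nonneg Ka s01 in auto)
  moreover have "x t0 * exp (K * t0) > 0" using x0 by simp
  ultimately have "x s * exp (K * s) > 0" by linarith
  hence xs: "x s > 0" by (simp add: zero_less_mult_iff)
  have "y t0 * exp (K * t0) \<le> y s * exp (K * s)"
    by (rule grow[of y y' b]) (use dy ineq nonneg Kb s01 in auto)
  moreover have "y t0 * exp (K * t0) > 0" using y0 by simp
  ultimately have "y s * exp (K * s) > 0" by linarith
  hence ys: "y s > 0" by (simp add: zero_less_mult_iff)
  show False using sS xs ys by (auto simp: S_def)
qed



lemma H_exp: "Hf m (p0 + s *\<^sub>R z) = 1 + s * (z$1 + 2 * z$2 + 4 * real m * z$3)"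
  by (simp add: Hf_def X1_def X2_def X3_def p0_def vec8_def algebra_simps)

lemma Q_exp: "Qf m e (p0 + s *\<^sub>R z) = s * (2 * z$1 + 8 * z$5 - 8 * real m * z$6 + 4 * real m * (4 * real m + 8) * z$7
     + (4 * real m + 2) * e / 2 * z$8)
   + s^2 * (z$1^2 + 2 * z$2^2 + 4 * real m * z$3^2 - 2 * z$4 * z$5 - 4 * real m * z$4 * z$6)"
  by (simp add: Qf_def Gf_def Rs_def R1_def R2_def R3_def nn_def X1_def X2_def X3_def Z1_def Z2_def Z3_def Z4_def Wc_def
     p0_def vec8_def algebra_simps power2_eq_square)

lemma W_exp: "Wc (p0 + s *\<^sub>R z) = s * z$8"
  by (simp add: Wc_def p0_def vec8_def)

lemma V_comps:
  fixes m :: nat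
  assumes V_def: "V = wth m \<theta> k + s4 *\<^sub>R w4 + s5 *\<^sub>R w5 m e"
  shows "V$1 + 2 * V$2 + 4 * real m * V$3 = - s4"
    and "2 * V$1 + 8 * V$5 - 8 * real m * V$6 + 4 * real m * (4 * real m + 8) * V$7
     + (4 * real m + 2) * e / 2 * V$8 = -2 * s4"
    and "V$8 = 2 * s5"
  unfolding V_def wth_def w1_def w2_def w3_def w4_def w5_def w6_def
  by (simp_all add: vec8_def algebra_simps power2_eq_square add_divide_distrib[symmetric] diff_divide_distrib[symmetric]) (simp_all add: field_simps)

lemma asym:
  fixes m k :: nat and \<theta> s4 s5 :: real and xi :: "real \<Rightarrow> real ^ 8" and J :: "real set"
  assumes xi: "is_xi m k \<theta> s4 s5 xi J" and s4: "s4 > 0" and s5: "s5 \<ge> 0"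
  defines "e \<equiv> epsof s5"
  shows "\<exists>B. \<forall>\<eta>\<le>B.
     1 - Hf m (xi \<eta>) > 0 \<and> - Qf m e (xi \<eta>) - (1 - Hf m (xi \<eta>)) > 0 \<and>
     (- Qf m e (xi \<eta>)) * (- Qf m e (xi \<eta>) - (1 - Hf m (xi \<eta>))) - e * Wc (xi \<eta>) * (1 - Hf m (xi \<eta>))^2 / 2 > 0 \<and>
     (s5 > 0 \<longrightarrow> Wc (xi \<eta>) > 0)"
proof -
  define V where "V = wth m \<theta> k + s4 *\<^sub>R w4 + s5 *\<^sub>R w5 m e"
  note Vc = V_comps[OF V_def]
  from xi obtain \<delta> C where d: "\<delta> > 0" and bnd: "\<forall>\<^sub>F \<eta> in at_bot.
        norm (xi \<eta> - (p0 + exp (2 * \<eta>) *\<^sub>R V)) \<le> C * exp ((2 + \<delta>) * \<eta>)"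
    unfolding is_xi_def V_def e_def by blast
  define z where "z \<eta> = exp (-2 * \<eta>) *\<^sub>R (xi \<eta> - p0)" for \<eta>
  have xiz: "xi \<eta> = p0 + exp (2 * \<eta>) *\<^sub>R z \<eta>" for \<eta>
    by (simp add: z_def exp_minus[symmetric] exp_add[symmetric])
  have "((\<lambda>\<eta>. z \<eta> - V) \<longlongrightarrow> 0) at_bot"
  proof (rule Lim_null_comparison)
    show "\<forall>\<^sub>F \<eta> in at_bot. norm (z \<eta> - V) \<le> C * exp (\<delta> * \<eta>)"
    proof (rule eventually_mono[OF bnd])
      fix \<eta> assume h: "norm (xi \<eta> - (p0 + exp (2 * \<eta>) *\<^sub>R V)) \<le> C * exp ((2 + \<delta>) * \<eta>)"
      have "z \<eta> - V = exp (-2 * \<eta>) *\<^sub>R (xi \<eta> - (p0 + exp (2 * \<eta>) *\<^sub>R V))"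
        by (simp add: z_def algebra_simps exp_minus[symmetric] exp_add[symmetric])
      hence "norm (z \<eta> - V) = exp (-2 * \<eta>) * norm (xi \<eta> - (p0 + exp (2 * \<eta>) *\<^sub>R V))" by simp
      also have "\<dots> \<le> exp (-2 * \<eta>) * (C * exp ((2 + \<delta>) * \<eta>))"
        using h by (intro mult_left_mono) auto
      also have "\<dots> = C * exp (\<delta> * \<eta>)"
        by (simp add: exp_add[symmetric] algebra_simps)
      finally show "norm (z \<eta> - V) \<le> C * exp (\<delta> * \<eta>)" .
    qed
    show "((\<lambda>\<eta>. C * exp (\<delta> * \<eta>)) \<longlongrightarrow> 0) at_bot"
      using d by real_asymp
  qed
  hence zV: "(z \<longlongrightarrow> V) at_bot" by (simp add: LIM_zero_iff)
  have zc: "((\<lambda>\<eta>. z \<eta> $ i) \<longlongrightarrow> V $ i) at_bot" for i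
    by (intro tendsto_vec_nth zV)
  define ex where "ex \<eta> = exp (2 * \<eta>)" for \<eta> :: real
  have ex0: "(ex \<longlongrightarrow> 0) at_bot" unfolding ex_def by real_asymp
  define zz where "zz i \<eta> = z \<eta> $ i" for i \<eta>
  have zc': "(zz i \<longlongrightarrow> V $ i) at_bot" for i unfolding zz_def[abs_def] by (rule zc)
  define Pn where "Pn \<eta> = - (zz 1 \<eta> + 2 * zz 2 \<eta> + 4 * real m * zz 3 \<eta>)" for \<eta>
  define Qn where "Qn \<eta> = - ((2 * zz 1 \<eta> + 8 * zz 5 \<eta> - 8 * real m * zz 6 \<eta> + 4 * real m * (4 * real m + 8) * zz 7 \<eta>
     + (4 * real m + 2) * e / 2 * zz 8 \<eta>)
   + ex \<eta> * (zz 1 \<eta>^2 + 2 * zz 2 \<eta>^2 + 4 * real m * zz 3 \<eta>^2 - 2 * zz 4 \<eta> * zz 5 \<eta> - 4 * real m * zz 4 \<eta> * zz 6 \<eta>))" for \<eta>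
  define En where "En \<eta> = Qn \<eta> * (Qn \<eta> - Pn \<eta>) - e * (ex \<eta> * zz 8 \<eta>) * Pn \<eta> ^ 2 / 2" for \<eta>
  have Pl: "(Pn \<longlongrightarrow> s4) at_bot"
    unfolding Pn_def using Vc(1) by (auto intro!: tendsto_eq_intros zc')
  have Ql: "(Qn \<longlongrightarrow> 2 * s4) at_bot"
  proof -
    have "(Qn \<longlongrightarrow> - ((2 * V$1 + 8 * V$5 - 8 * real m * V$6 + 4 * real m * (4 * real m + 8) * V$7
     + (4 * real m + 2) * e / 2 * V$8)
   + 0 * (V$1^2 + 2 * V$2^2 + 4 * real m * V$3^2 - 2 * V$4 * V$5 - 4 * real m * V$4 * V$6))) at_bot"
      (is "(_ \<longlongrightarrow> ?L) _")
      unfolding Qn_def by (intro tendsto_intros zc' ex0)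
    moreover have "?L = 2 * s4" using Vc(2) by linarith
    ultimately show ?thesis by simp
  qed
  have El: "(En \<longlongrightarrow> 2 * s4 * (2 * s4 - s4) - e * (0 * V $ 8) * s4 ^ 2 / 2) at_bot"
    unfolding En_def by (intro tendsto_intros Pl Ql zc' ex0) auto
  have ev1: "\<forall>\<^sub>F \<eta> in at_bot. Pn \<eta> > 0" using Pl s4 by (rule order_tendstoD)
  have ev2: "\<forall>\<^sub>F \<eta> in at_bot. Qn \<eta> - Pn \<eta> > 0"
    using tendsto_diff[OF Ql Pl] s4 by (intro order_tendstoD) auto
  have ev3: "\<forall>\<^sub>F \<eta> in at_bot. En \<eta> > 0"
    using El s4 by (intro order_tendstoD[of _ "2 * s4 * (2 * s4 - s4) - e * (0 * V $ 8) * s4 ^ 2 / 2"]) auto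
  have ev4: "\<forall>\<^sub>F \<eta> in at_bot. s5 > 0 \<longrightarrow> zz 8 \<eta> > 0"
  proof (cases "s5 > 0")
    case True
    then show ?thesis using zc'[of 8] Vc(3) by (auto dest: order_tendstoD(1)[of _ _ _ 0] elim: eventually_mono)
  qed auto
  have "\<forall>\<^sub>F \<eta> in at_bot. Pn \<eta> > 0 \<and> Qn \<eta> - Pn \<eta> > 0 \<and> En \<eta> > 0 \<and> (s5 > 0 \<longrightarrow> zz 8 \<eta> > 0)"
    using ev1 ev2 ev3 ev4 by eventually_elim auto
  then obtain B where B: "\<And>\<eta>. \<eta> \<le> B \<Longrightarrow> Pn \<eta> > 0 \<and> Qn \<eta> - Pn \<eta> > 0 \<and> En \<eta> > 0 \<and> (s5 > 0 \<longrightarrow> zz 8 \<eta> > 0)"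
    by (auto simp: eventually_at_bot_linorder)
  show ?thesis
  proof (intro exI allI impI)
    fix \<eta> assume "\<eta> \<le> B"
    note Bh = B[OF this]
    have p: "1 - Hf m (xi \<eta>) = exp (2 * \<eta>) * Pn \<eta>"
      unfolding xiz H_exp Pn_def zz_def by (simp add: algebra_simps)
    have q: "- Qf m e (xi \<eta>) = exp (2 * \<eta>) * Qn \<eta>"
      unfolding xiz Q_exp Qn_def zz_def ex_def by (simp add: algebra_simps power2_eq_square)
    have w: "Wc (xi \<eta>) = exp (2 * \<eta>) * z \<eta> $ 8"
      unfolding xiz W_exp ..
    have E: "(- Qf m e (xi \<eta>)) * (- Qf m e (xi \<eta>) - (1 - Hf m (xi \<eta>))) - e * Wc (xi \<eta>) * (1 - Hf m (xi \<eta>))^2 / 2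
       = exp (2 * \<eta>) * exp (2 * \<eta>) * En \<eta>"
      unfolding p q w En_def zz_def ex_def by (simp add: algebra_simps power2_eq_square)
    show "1 - Hf m (xi \<eta>) > 0 \<and> - Qf m e (xi \<eta>) - (1 - Hf m (xi \<eta>)) > 0 \<and>
     (- Qf m e (xi \<eta>)) * (- Qf m e (xi \<eta>) - (1 - Hf m (xi \<eta>))) - e * Wc (xi \<eta>) * (1 - Hf m (xi \<eta>))^2 / 2 > 0 \<and>
     (s5 > 0 \<longrightarrow> Wc (xi \<eta>) > 0)"
    proof (intro conjI impI)
      show "1 - Hf m (xi \<eta>) > 0" using Bh p by simp
      have "- Qf m e (xi \<eta>) - (1 - Hf m (xi \<eta>)) = exp (2 * \<eta>) * (Qn \<eta> - Pn \<eta>)"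
        using p q by (simp add: algebra_simps)
      thus "- Qf m e (xi \<eta>) - (1 - Hf m (xi \<eta>)) > 0" using Bh by simp
      show "0 < (- Qf m e (xi \<eta>)) * (- Qf m e (xi \<eta>) - (1 - Hf m (xi \<eta>))) - e * Wc (xi \<eta>) * (1 - Hf m (xi \<eta>))^2 / 2"
        unfolding E using Bh by simp
      assume "s5 > 0" thus "Wc (xi \<eta>) > 0" using Bh w by (simp add: zz_def)
    qed
  qed
qed


theorem proposition4p7:
  fixes m k :: nat and \<theta> s4 s5 :: real and xi :: "real \<Rightarrow> real ^ 8" and J :: "real set"
  assumes "m \<ge> 1" and "k \<ge> 1"
    and "0 \<le> \<theta>" and "\<theta> \<le> pi" and "s4 > 0" and "s5 \<ge> 0"
    and "is_xi m k \<theta> s4 s5 xi J"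
  shows "\<forall>\<eta>1\<in>J. \<forall>\<eta>2\<in>J. \<eta>1 \<le> \<eta>2 \<and> (\<forall>t\<in>{\<eta>1..\<eta>2}. xi t \<in> Bset m (epsof s5)) \<longrightarrow>
           (Hf m (xi \<eta>2) - 1) / sqrt (- Qf m (epsof s5) (xi \<eta>2))
             \<le> (Hf m (xi \<eta>1) - 1) / sqrt (- Qf m (epsof s5) (xi \<eta>1))"
proof (intro ballI impI, elim conjE)
  fix \<eta>1 \<eta>2 assume h1: "\<eta>1 \<in> J" and h2: "\<eta>2 \<in> J" and h12: "\<eta>1 \<le> \<eta>2"
  define e where "e = epsof s5"
  have xi: "is_xi m k \<theta> s4 s5 xi J" by fact
  have s4: "s4 > 0" and s5: "s5 \<ge> 0" by fact+
  obtain B where B: "\<And>\<eta>. \<eta> \<le> B \<Longrightarrow>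
     1 - Hf m (xi \<eta>) > 0 \<and> - Qf m e (xi \<eta>) - (1 - Hf m (xi \<eta>)) > 0 \<and>
     (- Qf m e (xi \<eta>)) * (- Qf m e (xi \<eta>) - (1 - Hf m (xi \<eta>))) - e * Wc (xi \<eta>) * (1 - Hf m (xi \<eta>))^2 / 2 > 0 \<and>
     (s5 > 0 \<longrightarrow> Wc (xi \<eta>) > 0)"
    using asym[OF xi s4 s5] unfolding e_def by blast
  from xi obtain t0 where t0J: "t0 \<in> J" and t0b: "t0 < min B \<eta>1"
    unfolding is_xi_def by blast
  have ic: "integral_curve m e xi J"
    using xi unfolding is_xi_def maximal_integral_curve_def e_def by blast
  hence ivJ: "is_interval J" and derJ: "\<And>t. t \<in> J \<Longrightarrow> (xi has_vector_derivative Fld m e (xi t)) (at t)"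
    unfolding integral_curve_def by auto
  have sub: "t \<in> J" if "t0 \<le> t" "t \<le> \<eta>2" for t
    using ivJ t0J h2 that unfolding is_interval_1 by blast
  have der: "(xi has_vector_derivative Fld m e (xi t)) (at t)" if "t0 \<le> t" "t \<le> \<eta>2" for t
    using derJ sub that by blast
  have t02: "t0 \<le> \<eta>2" using t0b h12 by simp
  define P where "P t = 1 - Hf m (xi t)" for t
  define Qq where "Qq t = - Qf m e (xi t)" for t
  define Dd where "Dd t = Qq t - P t" for t
  define Wt where "Wt t = Wc (xi t)" for t
  define Gt where "Gt t = Gf m (xi t)" for t
  define gt where "gt t = Gt t - e / 2 * Wt t" for t
  define Ee where "Ee t = Qq t * Dd t - e * Wt t * P t ^ 2 / 2" for t
  have init: "P t0 > 0" "Dd t0 > 0" "Ee t0 > 0" "s5 > 0 \<Longrightarrow> Wt t0 > 0"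
    using B[of t0] t0b unfolding P_def Qq_def Dd_def Ee_def Wt_def by auto
  have dP: "(P has_real_derivative gt t * P t + Dd t) (at t)" if "t0 \<le> t" "t \<le> \<eta>2" for t
    unfolding P_def[abs_def]
    by (rule derivative_eq_intros H_deriv[OF der[OF that]] refl | simp)+
       (simp add: gt_def Gt_def Wt_def Dd_def Qq_def P_def field_simps)
  have dQ: "(Qq has_real_derivative 2 * gt t * Qq t + e * Wt t * P t) (at t)" if "t0 \<le> t" "t \<le> \<eta>2" for t
    unfolding Qq_def[abs_def]
    by (rule derivative_eq_intros Q_deriv[OF der[OF that]] refl | simp)+
       (simp add: gt_def Gt_def Wt_def Dd_def Qq_def P_def algebra_simps)
  have dW: "(Wt has_real_derivative 2 * gt t * Wt t) (at t)" if "t0 \<le> t" "t \<le> \<eta>2" for t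
    unfolding Wt_def[abs_def] using W_deriv[OF der[OF that]] by (simp add: gt_def Gt_def Wt_def)
  have dD: "(Dd has_real_derivative (2 * gt t - 1) * Dd t + P t * (Gt t + e / 2 * Wt t)) (at t)"
    if "t0 \<le> t" "t \<le> \<eta>2" for t
    unfolding Dd_def[abs_def]
    by (rule derivative_eq_intros dQ[OF that] dP[OF that] refl | simp)+
       (simp add: gt_def Dd_def algebra_simps)
  have dE: "(Ee has_real_derivative (4 * gt t - 1) * Ee t + P t * Qq t * Gt t + e * Wt t * P t * Dd t / 2) (at t)"
    if "t0 \<le> t" "t \<le> \<eta>2" for t
    unfolding Ee_def[abs_def]
    by (rule derivative_eq_intros dQ[OF that] dP[OF that] dD[OF that] dW[OF that] refl | simp)+
       (simp add: gt_def Ee_def Dd_def field_simps power2_eq_square)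
  have contg: "continuous_on {t0..\<eta>2} gt"
  proof (rule continuous_at_imp_continuous_on, intro ballI)
    fix t assume "t \<in> {t0..\<eta>2}"
    hence "t0 \<le> t" "t \<le> \<eta>2" by auto
    have "isCont xi t"
      using has_vector_derivative_continuous[OF der[OF \<open>t0 \<le> t\<close> \<open>t \<le> \<eta>2\<close>]] .
    thus "isCont gt t"
      unfolding gt_def[abs_def] Gt_def Wt_def Gf_def X1_def X2_def X3_def Wc_def
      by (intro continuous_intros) auto
  qed
  have Gnn: "Gt t \<ge> 0" for t
    unfolding Gt_def Gf_def by (intro add_nonneg_nonneg mult_nonneg_nonneg) auto
  have eW: "e * Wt t \<ge> 0" if "t0 \<le> t" "t \<le> \<eta>2" for t
  proof (cases "s5 > 0")
    case True
    hence e1: "e = 1" by (simp add: e_def epsof_def)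
    have "Wt t > 0 \<and> (\<lambda>_. 1::real) t > 0"
      by (rule pos2[of t0 t Wt "\<lambda>t. 2 * gt t * Wt t" "\<lambda>_. 1" "\<lambda>_. 0" "\<lambda>t. 2 * gt t" "\<lambda>_. 0"])
         (use that dW init(4)[OF True] contg in \<open>auto intro!: continuous_intros
             elim!: continuous_on_subset\<close>)
    thus ?thesis using e1 by simp
  next
    case False
    hence "e = 0" by (simp add: e_def epsof_def)
    thus ?thesis by simp
  qed
  have PD: "P t > 0 \<and> Dd t > 0" if "t0 \<le> t" "t \<le> \<eta>2" for t
  proof (rule pos2[of t0 t P "\<lambda>t. gt t * P t + Dd t" Dd "\<lambda>t. (2 * gt t - 1) * Dd t + P t * (Gt t + e / 2 * Wt t)" gt "\<lambda>t. 2 * gt t - 1"])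
    fix s assume s: "t0 \<le> s" "s \<le> t" "0 \<le> P s" "0 \<le> Dd s"
    have "P s * (Gt s + e / 2 * Wt s) \<ge> 0"
      using s that eW[of s] Gnn[of s] by (intro mult_nonneg_nonneg) auto
    thus "gt s * P s \<le> gt s * P s + Dd s \<and> (2 * gt s - 1) * Dd s \<le> (2 * gt s - 1) * Dd s + P s * (Gt s + e / 2 * Wt s)"
      using s by simp
  qed (use that dP dD init contg in \<open>auto intro!: continuous_intros elim!: continuous_on_subset\<close>)
  have Epos: "Ee t > 0" if "t0 \<le> t" "t \<le> \<eta>2" for t
  proof -
    have "Ee t > 0 \<and> (\<lambda>_. 1::real) t > 0"
    proof (rule pos2[of t0 t Ee "\<lambda>t. (4 * gt t - 1) * Ee t + P t * Qq t * Gt t + e * Wt t * P t * Dd t / 2"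
        "\<lambda>_. 1" "\<lambda>_. 0" "\<lambda>t. 4 * gt t - 1" "\<lambda>_. 0"])
      fix s assume s: "t0 \<le> s" "s \<le> t" "0 \<le> Ee s" "0 \<le> (1::real)"
      have ps: "P s > 0" "Dd s > 0" using PD[of s] s that by auto
      hence "Qq s > 0" unfolding Dd_def by simp
      hence "P s * Qq s * Gt s \<ge> 0" using ps Gnn[of s] by simp
      moreover have "e * Wt s * P s * Dd s / 2 \<ge> 0" using eW[of s] s that ps by simp
      ultimately show "(4 * gt s - 1) * Ee s \<le> (4 * gt s - 1) * Ee s + P s * Qq s * Gt s + e * Wt s * P s * Dd s / 2
         \<and> 0 * 1 \<le> (0::real)" by simp
    qed (use that dE init contg in \<open>auto intro!: continuous_intros elim!: continuous_on_subset\<close>)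
    thus ?thesis by simp
  qed
  show "(Hf m (xi \<eta>2) - 1) / sqrt (- Qf m (epsof s5) (xi \<eta>2))
             \<le> (Hf m (xi \<eta>1) - 1) / sqrt (- Qf m (epsof s5) (xi \<eta>1))"
  proof -
    have "(\<lambda>t. - P t / sqrt (Qq t)) \<eta>2 \<le> (\<lambda>t. - P t / sqrt (Qq t)) \<eta>1"
    proof (rule DERIV_nonpos_imp_nonincreasing[OF h12])
      fix t assume t: "\<eta>1 \<le> t" "t \<le> \<eta>2"
      hence tt: "t0 \<le> t" "t \<le> \<eta>2" using t0b by auto
      have ps: "P t > 0" "Dd t > 0" using PD[OF tt] by auto
      hence qp: "Qq t > 0" unfolding Dd_def by simp
      define sq where "sq = sqrt (Qq t)"
      have sq0: "sq > 0" using qp by (simp add: sq_def)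
      have sqq: "sq * sq = Qq t" using qp by (simp add: sq_def)
      have ds: "((\<lambda>t. sqrt (Qq t)) has_real_derivative inverse sq / 2 * (2 * gt t * Qq t + e * Wt t * P t)) (at t)"
        unfolding sq_def by (rule DERIV_chain2[OF DERIV_real_sqrt[OF qp] dQ[OF tt]])
      have dm: "((\<lambda>t. - P t) has_real_derivative - (gt t * P t + Dd t)) (at t)"
        by (rule DERIV_minus[OF dP[OF tt]])
      have "((\<lambda>t. - P t / sqrt (Qq t)) has_real_derivative
          (- (gt t * P t + Dd t) * sq - (- P t) * (inverse sq / 2 * (2 * gt t * Qq t + e * Wt t * P t))) / (sq * sq)) (at t)"
        using DERIV_divide[OF dm ds] sq0 unfolding sq_def by simp
      moreover have "(- (gt t * P t + Dd t) * sq - (- P t) * (inverse sq / 2 * (2 * gt t * Qq t + e * Wt t * P t))) / (sq * sq)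
          = - Ee t / (Qq t * sqrt (Qq t))"
      proof -
        have "(- (gt t * P t + Dd t) * sq - (- P t) * (inverse sq / 2 * (2 * gt t * Qq t + e * Wt t * P t)))
            = (- (gt t * P t + Dd t) * 2 * (sq * sq) + P t * (2 * gt t * Qq t + e * Wt t * P t)) / (2 * sq)"
          using sq0 by (simp add: field_simps)
        also have "\<dots> = - Ee t / sq"
          unfolding sqq Ee_def using sq0 by (simp add: field_simps power2_eq_square)
        finally have X: "(- (gt t * P t + Dd t) * sq - (- P t) * (inverse sq / 2 * (2 * gt t * Qq t + e * Wt t * P t))) = - Ee t / sq" .
        have Y: "Qq t * sqrt (Qq t) = sq * sq * sq" using sqq by (simp add: sq_def)
        show ?thesis unfolding X Y by (simp add: divide_divide_eq_left mult_ac)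
      qed
      ultimately have "((\<lambda>t. - P t / sqrt (Qq t)) has_real_derivative - Ee t / (Qq t * sqrt (Qq t))) (at t)" by simp
      moreover have "- Ee t / (Qq t * sqrt (Qq t)) \<le> 0"
        using Epos[OF tt] qp by (simp add: divide_nonpos_pos)
      ultimately show "\<exists>y. ((\<lambda>t. - P t / sqrt (Qq t)) has_real_derivative y) (at t) \<and> y \<le> 0" by blast
    qed
    thus ?thesis by (simp add: P_def Qq_def e_def)
  qed
qed

end
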